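(* Let $a,p>0$, $g(r;a,p)=a\,e^{-pr^2}$, and $I_{n,k,l}=\int_0^\infty f^k(r)\,g^l(r;a,p)\,r^{2n+1}dr$. If $f$ satisfies condition (1), then $I_{n,k,l}$ exists for all $n,k\in\mathbb{N}_0$ and all $l\in\mathbb{N}$. Moreover, if $f$ satisfies condition (1) and $c_{2n}$ exists, then $I_{n,k,0}$ exists for all $k\in\mathbb{N}$.
   Context: $f:[0,\infty)\to\mathbb{R}$; $c_n=2\pi\int_0^\infty f(r)\,r^{n+1}dr$. Condition (1): there is a constant $F$ with $0\le f(r)\le F$ for all $r\ge0$, $c_0$ exists and $c_0>0$. $\mathbb{N}=\{1,2,\dots\}$, $\mathbb{N}_0=\{0,1,2,\dots\}$. *)

theory Defs
  imports "HOL-Analysis.Analysis"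
begin

definition c_exists :: "(real \<Rightarrow> real) \<Rightarrow> nat \<Rightarrow> bool" where
  "c_exists f n \<longleftrightarrow> set_integrable lborel {0..} (\<lambda>r. f r * r ^ (n + 1))"

definition c_coef :: "(real \<Rightarrow> real) \<Rightarrow> nat \<Rightarrow> real" where
  "c_coef f n = 2 * pi * (LINT r:{0..}|lborel. f r * r ^ (n + 1))"

definition cond1 :: "(real \<Rightarrow> real) \<Rightarrow> bool" where
  "cond1 f \<longleftrightarrow> (\<exists>F. \<forall>r\<ge>0. 0 \<le> f r \<and> f r \<le> F) \<and> c_exists f 0 \<and> c_coef f 0 > 0"

definition gfun :: "real \<Rightarrow> real \<Rightarrow> real \<Rightarrow> real" where
  "gfun a p r = a * exp (- p * r\<^sup>2)"

definition I_exists :: "(real \<Rightarrow> real) \<Rightarrow> real \<Rightarrow> real \<Rightarrow> nat \<Rightarrow> nat \<Rightarrow> nat \<Rightarrow> bool" where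
  "I_exists f a p n k l \<longleftrightarrow>
     set_integrable lborel {0..} (\<lambda>r. f r ^ k * gfun a p r ^ l * r ^ (2 * n + 1))"

end

theory Submission
  imports Defs "HOL-Probability.Distributions"
begin

lemma gauss_int:
  fixes p :: real assumes p: "p > 0"
  shows "integrable lborel (\<lambda>r. indicator {0..} r * (exp (- p * r\<^sup>2) * r ^ (2*n+1)))"
proof -
  have "integrable lborel (\<lambda>x::real. indicator {0..} x *\<^sub>R (exp (-x\<^sup>2)*x^(2 * n + 1)))"
    using gaussian_moment_odd_pos[of n] by (auto simp: has_bochner_integral_iff)
  hence "integrable lborel (\<lambda>x::real. (\<lambda>x. indicator {0..} x *\<^sub>R (exp (-x\<^sup>2)*x^(2 * n + 1))) (0 + sqrt p * x))"
    using p by (intro lborel_integrable_real_affine) auto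
  hence "integrable lborel (\<lambda>x. (1 / sqrt p ^ (2*n+1)) * ((\<lambda>x. indicator {0..} x *\<^sub>R (exp (-x\<^sup>2)*x^(2 * n + 1))) (0 + sqrt p * x)))"
    by (intro integrable_mult_right)
  moreover have "\<And>x. (1 / sqrt p ^ (2*n+1)) * ((\<lambda>x. indicator {0..} x *\<^sub>R (exp (-x\<^sup>2)*x^(2 * n + 1))) (0 + sqrt p * x))
      = indicator {0..} x * (exp (- p * x\<^sup>2) * x ^ (2*n+1))"
    using p by (auto simp: indicator_def power_mult_distrib zero_le_mult_iff field_simps)
  ultimately show ?thesis by simp
qed

theorem lemma3:
  fixes f :: "real \<Rightarrow> real" and a p :: real
  assumes "a > 0" and "p > 0" and "cond1 f"
  shows "(\<forall>n k l. l \<ge> 1 \<longrightarrow> I_exists f a p n k l)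
    \<and> (\<forall>n. c_exists f (2 * n) \<longrightarrow> (\<forall>k. k \<ge> 1 \<longrightarrow> I_exists f a p n k 0))"
proof -
  obtain F where F: "\<And>r. r \<ge> 0 \<Longrightarrow> 0 \<le> f r \<and> f r \<le> F" and c0: "c_exists f 0"
    using assms(3) unfolding cond1_def by blast
  have F0: "F \<ge> 0" using F[of 0] by auto
  define h where "h r = indicator {0..} r *\<^sub>R (f r * r ^ (0 + 1))" for r
  have hint: "integrable lborel h" using c0 unfolding c_exists_def set_integrable_def h_def by simp
  have hm: "h \<in> borel_measurable lborel" using hint by (rule borel_measurable_integrable)
  have meas: "(\<lambda>r. indicator {0..} r *\<^sub>R (f r ^ k * gfun a p r ^ l * r ^ (2 * n + 1))) \<in> borel_measurable lborel"
    for n k l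
  proof -
    have "(\<lambda>r. indicator {0<..} r * ((h r / r) ^ k * gfun a p r ^ l * r ^ (2 * n + 1))) \<in> borel_measurable lborel"
      using hm unfolding gfun_def by measurable
    moreover have "indicator {0<..} r * ((h r / r) ^ k * gfun a p r ^ l * r ^ (2 * n + 1))
        = indicator {0..} r *\<^sub>R (f r ^ k * gfun a p r ^ l * r ^ (2 * n + 1))" for r
      by (cases "r > 0"; cases "r = 0") (auto simp: h_def indicator_def)
    hence "(\<lambda>r. indicator {0<..} r * ((h r / r) ^ k * gfun a p r ^ l * r ^ (2 * n + 1)))
        = (\<lambda>r. indicator {0..} r *\<^sub>R (f r ^ k * gfun a p r ^ l * r ^ (2 * n + 1)))" by (rule ext)
    ultimately show ?thesis by metis
  qed
  have part1: "I_exists f a p n k l" if l: "l \<ge> 1" for n k l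
  proof -
    have gi: "integrable lborel (\<lambda>r. (F ^ k * a ^ l) * (indicator {0..} r * (exp (- p * r\<^sup>2) * r ^ (2*n+1))))"
      using gauss_int[OF assms(2)] by (intro integrable_mult_right)
    show ?thesis unfolding I_exists_def set_integrable_def
    proof (rule Bochner_Integration.integrable_bound[OF gi meas], rule AE_I2)
      fix r :: real
      show "norm (indicator {0..} r *\<^sub>R (f r ^ k * gfun a p r ^ l * r ^ (2 * n + 1)))
        \<le> norm ((F ^ k * a ^ l) * (indicator {0..} r * (exp (- p * r\<^sup>2) * r ^ (2*n+1))))"
      proof (cases "r \<ge> 0")
        case True
        have e1: "exp (- p * r\<^sup>2) \<le> 1" using assms(2) by simp
        have "gfun a p r ^ l = a ^ l * exp (- p * r\<^sup>2) ^ l" by (simp add: gfun_def power_mult_distrib)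
        moreover have "exp (- p * r\<^sup>2) ^ l \<le> exp (- p * r\<^sup>2)"
          using l e1 by (simp add: power_le_one_iff power_decreasing[of 1 l, simplified])
        moreover have "f r ^ k \<le> F ^ k" using F[OF True] by (intro power_mono) auto
        moreover have "f r ^ k \<ge> 0" using F[OF True] by simp
        ultimately have "f r ^ k * gfun a p r ^ l * r ^ (2 * n + 1) \<le> F ^ k * a ^ l * (exp (- p * r\<^sup>2) * r ^ (2*n+1))"
          using True assms(1) F0
          by (auto intro!: mult_mono simp: mult.assoc)
        moreover have "0 \<le> f r ^ k * gfun a p r ^ l * r ^ (2 * n + 1)"
          using True F[OF True] assms(1) by (simp add: gfun_def)
        ultimately show ?thesis using True by (simp add: indicator_def)
      qed (simp add: indicator_def)
    qed
  qed
  have part2: "I_exists f a p n k 0" if c: "c_exists f (2*n)" and k: "k \<ge> 1" for n k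
  proof -
    have ci: "integrable lborel (\<lambda>r. F ^ (k - 1) * (indicator {0..} r *\<^sub>R (f r * r ^ (2 * n + 1))))"
      using c unfolding c_exists_def set_integrable_def by (intro integrable_mult_right) simp
    show ?thesis unfolding I_exists_def set_integrable_def
    proof (rule Bochner_Integration.integrable_bound[OF ci meas], rule AE_I2)
      fix r :: real
      show "norm (indicator {0..} r *\<^sub>R (f r ^ k * gfun a p r ^ 0 * r ^ (2 * n + 1)))
        \<le> norm (F ^ (k - 1) * (indicator {0..} r *\<^sub>R (f r * r ^ (2 * n + 1))))"
      proof (cases "r \<ge> 0")
        case True
        have fk: "f r ^ k = f r ^ (k - 1) * f r" using k by (cases k) auto
        have "f r ^ (k-1) \<le> F ^ (k-1)" using F[OF True] by (intro power_mono) auto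
        hence "f r ^ k * r ^ (2 * n + 1) \<le> F ^ (k - 1) * (f r * r ^ (2 * n + 1))"
          unfolding fk using F[OF True] True by (auto simp: mult.assoc intro!: mult_right_mono)
        moreover have "0 \<le> f r ^ k * r ^ (2 * n + 1)" using F[OF True] True by simp
        ultimately show ?thesis using True by (simp add: indicator_def)
      qed (simp add: indicator_def)
    qed
  qed
  show ?thesis using part1 part2 by blast
qed

end
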